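(* Almost all partial sums $s_n=\sum_{r=0}^{n}1/r!$ of the Taylor series for $e$ are not convergents of the simple continued fraction expansion of $e$; that is, the set of $n\ge 0$ for which $s_n$ is a convergent of $e$ has natural density zero.
   Context: The convergents of $e$ are the rationals obtained by truncating the simple continued fraction expansion of $e$. *)

theory Defs
  imports Complex_Main
begin

fun cf_rem :: "real \<Rightarrow> nat \<Rightarrow> real" where
  "cf_rem x 0 = x"
| "cf_rem x (Suc k) = 1 / frac (cf_rem x k)"

definition cf_coeff :: "real \<Rightarrow> nat \<Rightarrow> int" where
  "cf_coeff x k = \<lfloor>cf_rem x k\<rfloor>"

text \<open>Value of the finite continued fraction [a_m; a_(m+1), ..., a_(m+n)].\<close>

fun eval_cf :: "(nat \<Rightarrow> int) \<Rightarrow> nat \<Rightarrow> nat \<Rightarrow> real" where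
  "eval_cf a m 0 = of_int (a m)"
| "eval_cf a m (Suc n) = of_int (a m) + 1 / eval_cf a (Suc m) n"

definition cf_convergent :: "real \<Rightarrow> nat \<Rightarrow> real" where
  "cf_convergent x n = eval_cf (cf_coeff x) 0 n"

end

theory Submission
  imports Defs
begin


lemma e_sums: "(\<lambda>n. 1 / fact n :: real) sums exp 1"
  using exp_converges[of "1::real"] by (simp add: divide_inverse)

lemma e_summable: "summable (\<lambda>n. 1 / fact n :: real)"
  using e_sums sums_summable by blast

lemma e_tail_eq: "exp 1 - (\<Sum>r\<le>n. 1 / fact r :: real) = (\<Sum>j. 1 / fact (j + Suc n))"
proof -
  have "(\<lambda>j. 1 / fact (j + Suc n) :: real) sums (exp 1 - (\<Sum>i<Suc n. 1 / fact i))"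
    using sums_split_initial_segment[OF e_sums, of "Suc n"] by simp
  then show ?thesis using lessThan_Suc_atMost sums_unique by metis
qed

lemma e_tail_lower: "exp 1 - (\<Sum>r\<le>n. 1 / fact r :: real) > 1 / fact (Suc n)"
proof -
  have s: "summable (\<lambda>j. 1 / fact (j + Suc n) :: real)"
    using e_summable summable_iff_shift[of "\<lambda>n. 1 / fact n :: real" "Suc n"] by simp
  have "(\<Sum>j<2. 1 / fact (j + Suc n) :: real) \<le> (\<Sum>j. 1 / fact (j + Suc n))"
    by (rule sum_le_suminf[OF s]) auto
  moreover have "(\<Sum>j<2. 1 / fact (j + Suc n) :: real) = 1 / fact (Suc n) + 1 / fact (Suc (Suc n))"
    by (simp add: numeral_2_eq_2)
  moreover have "1 / fact (Suc (Suc n)) > (0::real)" by simp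
  ultimately show ?thesis using e_tail_eq[of n] by linarith
qed

lemma fact_shift_ge: "fact (j + Suc n) \<ge> (fact (Suc n) * 2 ^ j :: real)"
proof (induction j)
  case 0 then show ?case by simp
next
  case (Suc j)
  have "fact (Suc j + Suc n) = real (Suc (j + Suc n)) * fact (j + Suc n)"
    by (simp only: add_Suc fact_Suc)
  also have "\<dots> \<ge> 2 * (fact (Suc n) * 2 ^ j)"
    by (rule mult_mono[OF _ Suc.IH]) auto
  also have "2 * (fact (Suc n) * 2 ^ j) = (fact (Suc n) * 2 ^ Suc j :: real)"
    by (simp only: power_Suc mult_ac)
  finally show ?case .
qed

lemma e_tail_upper: "exp 1 - (\<Sum>r\<le>n. 1 / fact r :: real) \<le> 2 / fact (Suc n)"
proof -
  have s: "summable (\<lambda>j. 1 / fact (j + Suc n) :: real)"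
    using e_summable summable_iff_shift[of "\<lambda>n. 1 / fact n :: real" "Suc n"] by simp
  have g: "summable (\<lambda>j. (1 / fact (Suc n)) * (1/2::real) ^ j)"
    by (intro summable_mult summable_geometric) auto
  have "(\<Sum>j. 1 / fact (j + Suc n) :: real) \<le> (\<Sum>j. (1 / fact (Suc n)) * (1/2::real) ^ j)"
  proof (rule suminf_le[OF _ s g])
    fix j
    have "(1 / fact (Suc n)) * (1/2::real) ^ j = 1 / (fact (Suc n) * 2 ^ j)"
      by (simp add: power_divide)
    also have "\<dots> \<ge> 1 / fact (j + Suc n)"
      by (rule divide_left_mono[OF fact_shift_ge]) auto
    finally show "1 / fact (j + Suc n) \<le> (1 / fact (Suc n)) * (1/2::real) ^ j" .
  qed
  also have "\<dots> = (1 / fact (Suc n)) * (\<Sum>j. (1/2::real) ^ j)"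
    by (rule suminf_mult[OF summable_geometric]) simp
  also have "(\<Sum>j. (1/2::real) ^ j) = 2"
    using suminf_geometric[of "1/2::real"] by simp
  also have "(1 / fact (Suc n)) * (2::real) = 2 / fact (Suc n)" by simp
  finally show ?thesis using e_tail_eq[of n] by simp
qed

fun A :: "nat \<Rightarrow> nat" where
  "A 0 = 1"
| "A (Suc n) = Suc n * A n + 1"

lemma s_eq: "(\<Sum>r\<le>n. 1 / fact r :: real) = real (A n) / fact n"
proof (induction n)
  case 0 then show ?case by simp
next
  case (Suc n)
  have "(\<Sum>r\<le>Suc n. 1 / fact r :: real) = real (A n) / fact n + 1 / fact (Suc n)"
    using Suc by simp
  also have "\<dots> = real (A (Suc n)) / fact (Suc n)"
  proof -
    have f: "fact n > (0::real)" by simp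
    have "real (A (Suc n)) / fact (Suc n) = (real (Suc n) * real (A n) + 1) / (real (Suc n) * fact n)"
      by (simp only: A.simps fact_Suc of_nat_add of_nat_mult of_nat_1)
    also have "\<dots> = real (A n) / fact n + 1 / (real (Suc n) * fact n)"
      using f by (simp add: add_divide_distrib)
    finally show ?thesis by (simp only: fact_Suc)
  qed
  finally show ?case .
qed

lemma e_irrational: "exp 1 \<notin> (\<rat> :: real set)"
proof
  assume "exp 1 \<in> (\<rat> :: real set)"
  then obtain p b where b: "b > 0" and pb: "exp 1 = real_of_int p / real_of_int b"
    by (metis Rats_cases')
  define q where "q = nat b"
  have q: "q > 0" using b unfolding q_def by simp
  have pq: "exp 1 = real_of_int p / real q" using pb b unfolding q_def by simp
  define n where "n = 2 * q"
  define z where "z = real q * fact n * (exp 1 - (\<Sum>r\<le>n. 1 / fact r))"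
  have "z = real q * fact n * (real_of_int p / real q) - real q * real (A n)"
    unfolding z_def pq s_eq by (simp add: field_simps)
  also have "\<dots> = real_of_int (p * fact n - int q * int (A n))"
    using q by simp
  finally have zeq: "z = real_of_int (p * fact n - int q * int (A n))" .
  have zi: "z \<in> \<int>" unfolding zeq by (rule Ints_of_int)
  have "1 / fact (Suc n) > (0::real)" by simp
  then have "exp 1 - (\<Sum>r\<le>n. 1 / fact r) > (0::real)" using e_tail_lower[of n] by linarith
  then have "z > 0" unfolding z_def using q by simp
  moreover have "z \<le> real q * fact n * (2 / fact (Suc n))"
    unfolding z_def using e_tail_upper[of n] q by (intro mult_left_mono) auto
  moreover have "real q * fact n * (2 / fact (Suc n)) = 2 * real q / real (Suc n)"
  proof -
    have f: "fact (Suc n) = real (Suc n) * (fact n :: real)" by (simp only: fact_Suc)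
    have "fact n \<noteq> (0::real)" by simp
    have g: "\<And>a b c::real. a \<noteq> 0 \<Longrightarrow> c * a * (2 / (b * a)) = 2 * c / b"
      by (simp add: field_simps)
    show ?thesis unfolding f by (rule g) fact
  qed
  moreover have "2 * real q / real (Suc n) < 1" using q unfolding n_def by (simp add: field_simps)
  ultimately have "0 < z \<and> z < 1" by linarith
  moreover obtain k where "z = real_of_int k" using zi by (rule Ints_cases)
  ultimately show False by auto
qed



fun R :: "(nat \<Rightarrow> int) \<Rightarrow> nat \<Rightarrow> nat \<Rightarrow> real \<Rightarrow> real" where
  "R a m 0 t = of_int (a m) + 1 / t"
| "R a m (Suc n) t = of_int (a m) + 1 / R a (Suc m) n t"

definition stp :: "int \<Rightarrow> int \<times> int \<Rightarrow> int \<times> int" where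
  "stp c v = (c * fst v + snd v, fst v)"

fun CC :: "(nat \<Rightarrow> int) \<Rightarrow> nat \<Rightarrow> nat \<Rightarrow> int \<times> int \<Rightarrow> int \<times> int" where
  "CC a m 0 v = stp (a m) v"
| "CC a m (Suc n) v = stp (a m) (CC a (Suc m) n v)"

definition "PP a m n = fst (CC a m n (1,0))"
definition "QQ a m n = snd (CC a m n (1,0))"
definition "P2 a m n = fst (CC a m n (0,1))"
definition "Q2 a m n = snd (CC a m n (0,1))"

lemma CC_rec:
  "PP a m (Suc n) = a m * PP a (Suc m) n + QQ a (Suc m) n"
  "QQ a m (Suc n) = PP a (Suc m) n"
  "P2 a m (Suc n) = a m * P2 a (Suc m) n + Q2 a (Suc m) n"
  "Q2 a m (Suc n) = P2 a (Suc m) n"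
  by (simp_all add: PP_def QQ_def P2_def Q2_def stp_def)

lemma CC_0:
  "PP a m 0 = a m" "QQ a m 0 = 1" "P2 a m 0 = 1" "Q2 a m 0 = 0"
  by (simp_all add: PP_def QQ_def P2_def Q2_def stp_def)

lemma CC_pos:
  assumes "\<And>k. a k \<ge> 1"
  shows "PP a m n \<ge> 1 \<and> QQ a m n \<ge> 1 \<and> P2 a m n \<ge> 1 \<and> Q2 a m n \<ge> 0"
proof (induction n arbitrary: m)
  case 0 then show ?case using assms by (simp add: CC_0)
next
  case (Suc n)
  have "a m \<ge> 1" by (rule assms)
  with Suc[of "Suc m"] show ?case unfolding CC_rec
    by (smt (verit) mult_le_cancel_left1 mult_nonneg_nonneg)
qed

lemma CC_det:
  "\<bar>PP a m n * Q2 a m n - P2 a m n * QQ a m n\<bar> = 1"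
proof (induction n arbitrary: m)
  case 0 then show ?case by (simp add: CC_0)
next
  case (Suc n)
  have "PP a m (Suc n) * Q2 a m (Suc n) - P2 a m (Suc n) * QQ a m (Suc n)
        = - (PP a (Suc m) n * Q2 a (Suc m) n - P2 a (Suc m) n * QQ a (Suc m) n)"
    unfolding CC_rec by (simp add: algebra_simps)
  then show ?case using Suc[of "Suc m"] by simp
qed

lemma CC_eval:
  assumes "\<And>k. a k \<ge> 1"
  shows "eval_cf a m n = PP a m n / QQ a m n"
proof (induction n arbitrary: m)
  case 0 then show ?case by (simp add: CC_0)
next
  case (Suc n)
  have p: "PP a (Suc m) n \<ge> 1" using CC_pos[of a, OF assms] by blast
  have "eval_cf a m (Suc n) = of_int (a m) + 1 / (PP a (Suc m) n / QQ a (Suc m) n)"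
    using Suc by simp
  also have "\<dots> = (a m * PP a (Suc m) n + QQ a (Suc m) n) / PP a (Suc m) n"
    using p by (simp add: field_simps)
  finally show ?case unfolding CC_rec by simp
qed

lemma CC_R:
  fixes t :: real
  assumes "\<And>k. a k \<ge> 1" and "t > 0"
  shows "R a m n t = (PP a m n * t + P2 a m n) / (QQ a m n * t + Q2 a m n)"
proof (induction n arbitrary: m)
  case 0 then show ?case using assms by (simp add: CC_0 field_simps)
next
  case (Suc n)
  have p: "PP a (Suc m) n \<ge> 1" "P2 a (Suc m) n \<ge> 1" using CC_pos[of a, OF assms(1)] by blast+
  have d: "PP a (Suc m) n * t + P2 a (Suc m) n > 0"
    using p assms(2) by (smt (verit) of_int_1_le_iff mult_pos_pos)
  have "R a m (Suc n) t = of_int (a m) + (QQ a (Suc m) n * t + Q2 a (Suc m) n) / (PP a (Suc m) n * t + P2 a (Suc m) n)"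
    using Suc by simp
  also have "\<dots> = ((a m * PP a (Suc m) n + QQ a (Suc m) n) * t + (a m * P2 a (Suc m) n + Q2 a (Suc m) n))
        / (PP a (Suc m) n * t + P2 a (Suc m) n)"
    using d by (simp add: field_simps)
  finally show ?case unfolding CC_rec by simp
qed

lemma cf_rem_irr:
  assumes "x \<notin> \<rat>" shows "cf_rem x k \<notin> \<rat>"
proof (induction k)
  case 0 then show ?case using assms by simp
next
  case (Suc k)
  show ?case
  proof
    assume "cf_rem x (Suc k) \<in> \<rat>"
    then have "inverse (cf_rem x (Suc k)) \<in> \<rat>" by (rule Rats_inverse)
    moreover have "inverse (cf_rem x (Suc k)) = frac (cf_rem x k)" by simp
    ultimately have "frac (cf_rem x k) \<in> \<rat>" by simp
    then have "frac (cf_rem x k) + of_int \<lfloor>cf_rem x k\<rfloor> \<in> \<rat>" by simp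
    then show False using Suc by (simp add: frac_def)
  qed
qed

lemma cf_rem_gt1:
  assumes "x \<notin> \<rat>" shows "cf_rem x (Suc k) > 1"
proof -
  have "cf_rem x k \<notin> \<int>" using cf_rem_irr[OF assms, of k] Ints_subset_Rats by blast
  then have "frac (cf_rem x k) \<noteq> 0" by (simp add: frac_eq_0_iff)
  then have "0 < frac (cf_rem x k)" "frac (cf_rem x k) < 1"
    using frac_ge_0[of "cf_rem x k"] frac_lt_1 by auto
  then show ?thesis by simp
qed

lemma cf_rem_step:
  assumes "x \<notin> \<rat>" shows "cf_rem x k = of_int (cf_coeff x k) + 1 / cf_rem x (Suc k)"
  by (simp add: cf_coeff_def frac_def)

lemma cf_rem_R:
  assumes "x \<notin> \<rat>" shows "cf_rem x m = R (cf_coeff x) m n (cf_rem x (m + n + 1))"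
proof (induction n arbitrary: m)
  case 0 then show ?case using cf_rem_step[OF assms] by simp
next
  case (Suc n)
  have "cf_rem x m = of_int (cf_coeff x m) + 1 / cf_rem x (Suc m)" by (rule cf_rem_step[OF assms])
  also have "cf_rem x (Suc m) = R (cf_coeff x) (Suc m) n (cf_rem x (Suc m + n + 1))" by (rule Suc)
  finally show ?case by simp
qed

lemma cf_coeff_ge1:
  assumes "x \<notin> \<rat>" "x \<ge> 1" shows "cf_coeff x k \<ge> 1"
proof (cases k)
  case 0 then show ?thesis using assms by (simp add: cf_coeff_def)
next
  case (Suc j) then show ?thesis using cf_rem_gt1[OF assms(1), of j]
    by (simp add: cf_coeff_def le_floor_iff)
qed

lemma convergent_approx:
  assumes "x \<notin> \<rat>" "x \<ge> 1"
  shows "\<exists>(P::int) (Q::int). Q \<ge> 1 \<and> cf_convergent x n = P / Q \<and> \<bar>x - P / Q\<bar> < 1 / (real_of_int Q)^2"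
proof -
  define a where "a = cf_coeff x"
  have a1: "\<And>k. a k \<ge> 1" unfolding a_def using cf_coeff_ge1[OF assms] by blast
  define t where "t = cf_rem x (n + 1)"
  have t1: "t > 1" unfolding t_def using cf_rem_gt1[OF assms(1), of n] by simp
  define P where "P = PP a 0 n"
  define Q where "Q = QQ a 0 n"
  define U where "U = P2 a 0 n"
  define V where "V = Q2 a 0 n"
  have pos: "P \<ge> 1" "Q \<ge> 1" "U \<ge> 1" "V \<ge> 0" unfolding P_def Q_def U_def V_def
    using CC_pos[of a, OF a1] by blast+
  have det: "\<bar>P * V - U * Q\<bar> = 1" unfolding P_def Q_def U_def V_def by (rule CC_det)
  have cv: "cf_convergent x n = P / Q" unfolding cf_convergent_def P_def Q_def a_def[symmetric]
    by (rule CC_eval[of a, OF a1])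
  have x0: "x = R a 0 n t" using cf_rem_R[OF assms(1), of 0 n] unfolding t_def a_def by simp
  have t0: "t > 0" using t1 by simp
  have xR: "x = (P * t + U) / (Q * t + V)"
    using x0 CC_R[where a=a and t=t and m=0 and n=n, OF a1 t0]
    unfolding P_def Q_def U_def V_def by simp
  have Qr: "real_of_int Q \<ge> 1" using pos by simp
  have D: "real_of_int Q * t + V > real_of_int Q" using pos t1
    by (smt (verit) Qr mult_less_cancel_left1 of_int_0_le_iff)
  have "x - P / Q = (Q * U - P * V) / (Q * (Q * t + V))"
    unfolding xR using Qr D by (simp add: field_simps)
  also have "\<bar>\<dots>\<bar> = 1 / (Q * (Q * t + V))"
  proof -
    have "\<bar>real_of_int (Q * U - P * V)\<bar> = 1" using det
      by (metis (mono_tags, opaque_lifting) abs_minus_commute mult.commute of_int_1 of_int_abs)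
    then show ?thesis using Qr D by (simp add: abs_div_pos)
  qed
  also have "\<dots> < 1 / (real_of_int Q)^2"
    using Qr D by (simp add: power2_eq_square divide_strict_left_mono mult_strict_left_mono)
  finally show ?thesis using cv pos by blast
qed



definition G :: "nat \<Rightarrow> nat" where "G n = gcd (A n) (fact n)"

lemma G_pos: "G n > 0" unfolding G_def by simp

lemma exp1_ge1: "exp (1::real) \<ge> 1" by simp

lemma conv_G:
  assumes "(\<Sum>r\<le>n. 1 / fact r :: real) \<in> range (cf_convergent (exp 1))"
  shows "fact n < Suc n * G n ^ 2"
proof -
  obtain k where k: "(\<Sum>r\<le>n. 1 / fact r :: real) = cf_convergent (exp 1) k" using assms by blast
  obtain P Q :: int where Q1: "Q \<ge> 1" and cv: "cf_convergent (exp 1) k = P / Q"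
    and apx: "\<bar>exp 1 - P / Q\<bar> < 1 / (real_of_int Q)^2"
    using convergent_approx[OF e_irrational exp1_ge1] by blast
  have sn: "real (A n) / fact n = P / Q" using k cv s_eq by simp
  obtain a' f' where a': "A n = a' * G n" and f': "fact n = f' * G n" and cop: "coprime a' f'"
    using gcd_coprime_exists[of "A n" "fact n"] unfolding G_def by auto
  have fpos: "f' > 0" using f' by (metis fact_gt_zero mult_is_0 neq0_conv) 
  have e1: "real (A n) * Q = P * real (fact n)" using sn Q1 by (simp add: field_simps)
  have "real (a' * G n) * Q = P * real (f' * G n)" unfolding a'[symmetric] f'[symmetric] by (rule e1)
  then have "real a' * Q = P * real f'" using G_pos[of n] by (simp add: algebra_simps)
  then have ieq: "int a' * Q = P * int f'" by (metis of_int_eq_iff of_int_mult of_int_of_nat_eq)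
  have "int f' dvd int a' * Q" unfolding ieq by simp
  moreover have "coprime (int f') (int a')" using cop by (simp add: coprime_commute)
  ultimately have "int f' dvd Q" using coprime_dvd_mult_right_iff by blast
  then have fQ: "int f' \<le> Q" using Q1 by (simp add: zdvd_imp_le)
  have "1 / fact (Suc n) < exp 1 - (\<Sum>r\<le>n. 1 / fact r :: real)" by (rule e_tail_lower)
  also have "\<dots> = \<bar>exp 1 - P / Q\<bar>" using k cv e_tail_lower[of n]
    by (smt (verit) divide_pos_pos fact_gt_zero)
  also have "\<dots> < 1 / (real_of_int Q)^2" by (rule apx)
  also have "\<dots> \<le> 1 / (real f')^2"
  proof -
    have "real f' \<le> real_of_int Q" using fQ by linarith
    then show ?thesis using fpos by (intro divide_left_mono power_mono) auto
  qed
  finally have "1 / fact (Suc n) < 1 / (real f')^2" .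
  moreover have g: "\<And>x y::real. x > 0 \<Longrightarrow> y > 0 \<Longrightarrow> 1/x < 1/y \<Longrightarrow> y < x"
    by (simp add: field_simps)
  ultimately have "(real f')^2 < fact (Suc n)" using fpos
    by (intro g[of "fact (Suc n)" "(real f')^2"]) auto
  then have "f' ^ 2 < fact (Suc n)" by (metis of_nat_fact of_nat_less_iff of_nat_power)
  also have "fact (Suc n) = Suc n * f' * G n" using f' by (simp add: algebra_simps)
  finally have "f' * f' < f' * (Suc n * G n)" by (simp add: power2_eq_square algebra_simps)
  then have "f' < Suc n * G n" by simp
  then have "f' * G n < Suc n * G n * G n" using G_pos[of n] by simp
  then show ?thesis using f' by (simp add: power2_eq_square algebra_simps)
qed

fun Bf :: "nat \<Rightarrow> nat \<Rightarrow> nat" where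
  "Bf m 0 = 0"
| "Bf m (Suc d) = (m + Suc d) * Bf m d + 1"

fun Ff :: "nat \<Rightarrow> nat \<Rightarrow> nat" where
  "Ff m 0 = 1"
| "Ff m (Suc d) = (m + Suc d) * Ff m d"

lemma A_split: "A (m + d) = Ff m d * A m + Bf m d"
  by (induction d) (simp_all add: algebra_simps)

lemma Bf_pos: "d > 0 \<Longrightarrow> Bf m d > 0"
  by (cases d) auto

lemma pow_plus1: "d \<ge> 1 \<Longrightarrow> (x::nat) ^ d + 1 \<le> (x + 1) ^ d"
proof (induction d rule: dec_induct)
  case base then show ?case by simp
next
  case (step d)
  have "x ^ Suc d + 1 \<le> (x + 1) * x ^ d + 1" by simp
  also have "\<dots> \<le> (x + 1) * (x ^ d + 1)" by simp
  also have "\<dots> \<le> (x + 1) * (x + 1) ^ d" using step.IH by (intro mult_left_mono) auto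
  finally show ?case by simp
qed

lemma Bf_bound: "Bf m d \<le> (m + d) ^ d"
proof (induction d)
  case 0 then show ?case by simp
next
  case (Suc d)
  show ?case
  proof (cases "d = 0")
    case True then show ?thesis by simp
  next
    case False
    have "(m + Suc d) * Bf m d \<le> (m + Suc d) * (m + d) ^ d" using Suc.IH by (rule mult_le_mono2)
    then have "Bf m (Suc d) \<le> (m + Suc d) * (m + d) ^ d + 1" by simp
    also have "\<dots> \<le> (m + Suc d) * ((m + d) ^ d + 1)" by simp
    also have "\<dots> \<le> (m + Suc d) * (m + Suc d) ^ d"
      using pow_plus1[of d "m + d"] False by (intro mult_left_mono) auto
    finally show ?thesis by simp
  qed
qed

lemma gcd_A_bound:
  assumes "i < j"
  shows "gcd (G i) (G j) \<le> j ^ (j - i)"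
proof -
  obtain d where j: "j = i + d" and d0: "d > 0" using assms by (metis less_imp_add_positive)
  have "gcd (A i) (A j) dvd Bf i d"
  proof -
    have "gcd (A i) (A j) dvd Ff i d * A i + Bf i d" using A_split[of i d] j by simp
    moreover have "gcd (A i) (A j) dvd Ff i d * A i" by simp
    ultimately show ?thesis by (simp add: dvd_add_right_iff)
  qed
  moreover have "gcd (G i) (G j) dvd gcd (A i) (A j)"
    unfolding G_def by (intro gcd_greatest) (meson dvd_trans gcd_dvd1 gcd_dvd2)+
  ultimately have "gcd (G i) (G j) dvd Bf i d" using dvd_trans by blast
  then have "gcd (G i) (G j) \<le> Bf i d" using Bf_pos[OF d0] by (simp add: dvd_imp_le)
  also have "\<dots> \<le> (i + d) ^ d" by (rule Bf_bound)
  finally show ?thesis unfolding j by simp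
qed

lemma gdvd: "gcd (k::nat) (m*n) dvd gcd k m * gcd k n"
  by (simp add: gcd_mult_distrib_nat mult.commute)

lemma three:
  fixes x y z D :: nat
  assumes "x dvd D" "y dvd D" "z dvd D" "D > 0"
  shows "x * y * z \<le> D * (gcd x y * gcd x z * gcd y z)"
proof -
  have yz: "y * z = lcm y z * gcd y z" by (simp add: lcm_mult_gcd)
  have xl: "x * lcm y z = lcm x (lcm y z) * gcd x (lcm y z)" by (simp add: lcm_mult_gcd)
  have l: "lcm x (lcm y z) \<le> D" using assms by (intro dvd_imp_le) auto
  have lyz: "lcm y z dvd y * z" by (intro lcm_least) simp_all
  have "gcd x (lcm y z) dvd gcd x (y * z)"
    by (intro gcd_greatest gcd_dvd1 dvd_trans[OF gcd_dvd2 lyz])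
  also have "\<dots> dvd gcd x y * gcd x z" by (rule gdvd)
  finally have g: "gcd x (lcm y z) \<le> gcd x y * gcd x z"
    by (rule dvd_imp_le) (use assms in \<open>auto\<close>)
  have "x * y * z = lcm x (lcm y z) * gcd x (lcm y z) * gcd y z"
    using yz xl by (metis mult.assoc)
  also have "\<dots> \<le> D * (gcd x y * gcd x z) * gcd y z"
    using l g by (intro mult_right_mono mult_mono) auto
  finally show ?thesis by (simp add: mult.assoc)
qed



lemma fact_add_le: "fact (a + d) \<le> (fact a :: nat) * (a + d) ^ d"
proof (induction d)
  case 0 then show ?case by simp
next
  case (Suc d)
  have "fact (a + Suc d) = (a + Suc d) * (fact (a + d) :: nat)" by simp
  also have "\<dots> \<le> (a + Suc d) * (fact a * (a + d) ^ d)" using Suc by (rule mult_le_mono2)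
  also have "\<dots> \<le> (a + Suc d) * (fact a * (a + Suc d) ^ d)"
    by (intro mult_le_mono2 power_mono) auto
  finally show ?case by (simp add: algebra_simps)
qed

lemma fact_add_ge: "(m + 1) ^ d * fact m \<le> (fact (m + d) :: nat)"
proof (induction d)
  case 0 then show ?case by simp
next
  case (Suc d)
  have "(m + 1) ^ Suc d * fact m = (m + 1) * ((m + 1) ^ d * fact m)" by (simp only: power_Suc mult.assoc)
  also have "\<dots> \<le> (m + Suc d) * fact (m + d)" using Suc by (intro mult_le_mono) auto
  also have "\<dots> = fact (m + Suc d)" by simp
  finally show ?case .
qed

lemma gpow:
  assumes "i < j" "j \<le> c" "j - i \<le> L"
  shows "gcd (G i) (G j) \<le> (c + 1) ^ L"
proof -
  have "gcd (G i) (G j) \<le> j ^ (j - i)" by (rule gcd_A_bound[OF assms(1)])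
  also have "\<dots> \<le> (c + 1) ^ (j - i)" using assms by (intro power_mono) auto
  also have "\<dots> \<le> (c + 1) ^ L" using assms by (intro power_increasing) auto
  finally show ?thesis .
qed

lemma G_dvd: "k \<le> c \<Longrightarrow> G k dvd fact c"
  unfolding G_def by (meson dvd_trans fact_dvd gcd_dvd2)

lemma no_three:
  assumes Sa: "fact a < Suc a * G a ^ 2" and Sb: "fact b < Suc b * G b ^ 2"
    and Sc: "fact c < Suc c * G c ^ 2"
    and ab: "a < b" and bc: "b < c" and cL: "c < a + L" and a0: "33 * L + 13 \<le> a"
  shows False
proof -
  define K where "K = 8 * L + 3"
  define X where "X = G a * G b * G c"
  define C where "C = c + 1"
  have C1: "C \<ge> 1" unfolding C_def by simp
  have "X \<le> fact c * (gcd (G a) (G b) * gcd (G a) (G c) * gcd (G b) (G c))"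
    unfolding X_def using ab bc by (intro three G_dvd) auto
  also have "\<dots> \<le> fact c * (C ^ L * C ^ L * C ^ L)"
    unfolding C_def using ab bc cL by (intro mult_le_mono2 mult_le_mono gpow) auto
  also have "C ^ L * C ^ L * C ^ L = C ^ (3 * L)"
  proof -
    have "3 * L = L + L + L" by simp
    then show ?thesis by (simp only: power_add)
  qed
  finally have X: "X \<le> fact c * C ^ (3 * L)" .
  have fc: "fact c \<le> fact a * C ^ L"
  proof -
    have "fact c \<le> (fact a :: nat) * (a + (c - a)) ^ (c - a)"
      using fact_add_le[of a "c - a"] ab bc by simp
    also have "\<dots> \<le> fact a * C ^ L" unfolding C_def using ab bc cL
      by (intro mult_le_mono2 order.trans[OF power_mono power_increasing]) auto
    finally show ?thesis .
  qed
  have "fact a * fact a * fact a \<le> (fact a * fact b * fact c :: nat)"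
    using ab bc by (intro mult_le_mono fact_mono) auto
  also have "\<dots> < (Suc a * G a ^ 2) * (Suc b * G b ^ 2) * (Suc c * G c ^ 2)"
    using Sa Sb Sc by (intro mult_strict_mono) (auto simp: fact_gt_zero)
  also have "\<dots> = (Suc a * Suc b * Suc c) * X ^ 2" unfolding X_def by (simp add: algebra_simps power2_eq_square)
  also have "\<dots> \<le> (C * C * C) * (fact c * C ^ (3 * L)) ^ 2"
  proof -
    have "Suc a \<le> C" "Suc b \<le> C" "Suc c \<le> C" using ab bc unfolding C_def by simp_all
    then show ?thesis using X by (intro mult_le_mono power_mono) auto
  qed
  also have "\<dots> \<le> (C * C * C) * (fact a * C ^ L * C ^ (3 * L)) ^ 2"
    using fc by (intro mult_le_mono2 power_mono mult_le_mono1) auto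
  also have "\<dots> = (fact a * fact a) * C ^ K"
  proof -
    have "K = L + L + 3 * L + 3 * L + 3" unfolding K_def by simp
    then have "C ^ K = C ^ L * C ^ L * C ^ (3 * L) * C ^ (3 * L) * (C * C * C)"
      by (simp only: power_add power3_eq_cube)
    then show ?thesis by (simp add: power2_eq_square algebra_simps)
  qed
  finally have "fact a * (fact a * fact a) < fact a * (fact a * C ^ K)" by (simp add: algebra_simps)
  then have "fact a * fact a < fact a * C ^ K" by (rule mult_less_cancel1[THEN iffD1, THEN conjunct2])
  then have lt: "fact a < C ^ K" by (rule mult_less_cancel1[THEN iffD1, THEN conjunct2])
  define m where "m = a - 2 * K"
  have am: "a = m + 2 * K" unfolding m_def K_def using a0 by simp
  have m17: "m \<ge> 17 * L + 7" unfolding m_def K_def using a0 by simp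
  have "C \<le> (m + 1) ^ 2"
  proof -
    have "C \<le> m + 2 * K + L" unfolding C_def using cL am by simp
    also have "\<dots> \<le> 2 * (m + 1)" using m17 unfolding K_def by simp
    also have "\<dots> \<le> (m + 1) * (m + 1)" using m17 by (intro mult_le_mono1) simp
    finally show ?thesis by (simp add: power2_eq_square)
  qed
  then have "C ^ K \<le> ((m + 1) ^ 2) ^ K" by (rule power_mono) simp
  also have "\<dots> = (m + 1) ^ (2 * K)" by (simp add: power_mult)
  also have "\<dots> \<le> (m + 1) ^ (2 * K) * fact m" by simp
  also have "\<dots> \<le> fact a" unfolding am by (rule fact_add_ge)
  finally show False using lt by simp
qed


definition SS :: "nat set" where
  "SS = {n. (\<Sum>r\<le>n. 1 / fact r :: real) \<in> range (cf_convergent (exp 1))}"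

lemma SS_G: "n \<in> SS \<Longrightarrow> fact n < Suc n * G n ^ 2"
  unfolding SS_def using conv_G by blast

lemma window:
  assumes "L > 0"
  shows "card (SS \<inter> {33 * L + 13 + j * L ..< 33 * L + 13 + j * L + L}) \<le> 2"
proof (rule ccontr)
  define T where "T = SS \<inter> {33 * L + 13 + j * L ..< 33 * L + 13 + j * L + L}"
  assume "\<not> card (SS \<inter> {33 * L + 13 + j * L ..< 33 * L + 13 + j * L + L}) \<le> 2"
  then have cT: "card T \<ge> 3" unfolding T_def by simp
  have fT: "finite T" unfolding T_def by simp
  have ne: "T \<noteq> {}" using cT by auto
  define a where "a = Min T"
  define c where "c = Max T"
  have aT: "a \<in> T" and cT': "c \<in> T" unfolding a_def c_def using fT ne by auto
  have "card (T - {a, c}) \<ge> 1"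
  proof -
    have "card (T - {a, c}) \<ge> card T - card {a, c}" by (rule diff_card_le_card_Diff) simp
    moreover have "card {a, c} \<le> 2" by (simp add: card_insert_le_m1)
    ultimately show ?thesis using cT by linarith
  qed
  then have "T - {a, c} \<noteq> {}" by (metis card.empty not_one_le_zero)
  then obtain b where b: "b \<in> T" "b \<noteq> a" "b \<noteq> c" by blast
  have ab: "a < b" using b fT unfolding a_def by (metis Min_le le_neq_implies_less)
  have bc: "b < c" using b fT unfolding c_def by (metis Max_ge le_neq_implies_less)
  have lo: "a \<ge> 33 * L + 13" and ca: "c < a + L" using aT cT' unfolding T_def by auto
  show False
    by (rule no_three[OF SS_G SS_G SS_G ab bc ca lo]) (use aT b cT' T_def in auto)
qed

lemma count_bound:
  assumes "L > 0"
  shows "card {n. n < N \<and> n \<in> SS} \<le> (33 * L + 13) + (N div L + 1) * 2"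
proof -
  define a0 where "a0 = 33 * L + 13"
  define W where "W j = SS \<inter> {a0 + j * L ..< a0 + j * L + L}" for j
  have sub: "{n. n < N \<and> n \<in> SS} \<subseteq> {..<a0} \<union> (\<Union>j<N div L + 1. W j)"
  proof
    fix n assume n: "n \<in> {n. n < N \<and> n \<in> SS}"
    show "n \<in> {..<a0} \<union> (\<Union>j<N div L + 1. W j)"
    proof (cases "n < a0")
      case True then show ?thesis by simp
    next
      case False
      define j where "j = (n - a0) div L"
      have e: "n - a0 = j * L + (n - a0) mod L" unfolding j_def by simp
      have "(n - a0) mod L < L" using assms by simp
      then have "n \<in> {a0 + j * L ..< a0 + j * L + L}" using e False by auto
      moreover have "j \<le> N div L" unfolding j_def using n by (intro div_le_mono) auto
      ultimately show ?thesis using n unfolding W_def by auto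
    qed
  qed
  have "card {n. n < N \<and> n \<in> SS} \<le> card ({..<a0} \<union> (\<Union>j<N div L + 1. W j))"
    by (rule card_mono[OF _ sub]) (simp add: W_def)
  also have "\<dots> \<le> card {..<a0} + card (\<Union>j<N div L + 1. W j)" by (rule card_Un_le)
  also have "card (\<Union>j<N div L + 1. W j) \<le> (\<Sum>j<N div L + 1. card (W j))" by (rule card_UN_le) simp
  also have "\<dots> \<le> (\<Sum>j<N div L + 1. 2)"
    by (rule sum_mono) (use window[OF assms] in \<open>simp add: W_def a0_def\<close>)
  finally show ?thesis unfolding a0_def by simp
qed

theorem corollary3p3:
  shows "(\<lambda>N. real (card {n. n < N \<and>
            (\<Sum>r\<le>n. 1 / fact r :: real) \<in> range (cf_convergent (exp 1))}) / real N)
         \<longlonglongrightarrow> 0"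
proof (rule LIMSEQ_I)
  fix r :: real assume r: "r > 0"
  define L :: nat where "L = nat \<lceil>4 / r\<rceil> + 1"
  have L0: "L > 0" unfolding L_def by simp
  have Lr: "real L > 4 / r" unfolding L_def by linarith
  define a0 where "a0 = 33 * L + 13"
  define N0 :: nat where "N0 = nat \<lceil>4 * (real a0 + 2) / r\<rceil> + 1"
  have N0r: "real N0 > 4 * (real a0 + 2) / r" unfolding N0_def by linarith
  show "\<exists>no. \<forall>N\<ge>no. norm (real (card {n. n < N \<and>
            (\<Sum>r\<le>n. 1 / fact r :: real) \<in> range (cf_convergent (exp 1))}) / real N - 0) < r"
  proof (intro exI allI impI)
    fix N assume N: "N \<ge> N0"
    have Npos: "real N > 0" using N N0r r
      by (smt (verit) divide_nonneg_pos of_nat_0_le_iff of_nat_mono)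
    have NN: "real N > 4 * (real a0 + 2) / r" using N N0r by (smt (verit) of_nat_mono)
    have set_eq: "{n. n < N \<and> (\<Sum>r\<le>n. 1 / fact r :: real) \<in> range (cf_convergent (exp 1))}
        = {n. n < N \<and> n \<in> SS}" unfolding SS_def by simp
    have cb: "real (card {n. n < N \<and> n \<in> SS}) \<le> real a0 + 2 + 2 * real (N div L)"
    proof -
      have "real (card {n. n < N \<and> n \<in> SS}) \<le> real ((33 * L + 13) + (N div L + 1) * 2)"
        using count_bound[OF L0, of N] by (simp only: of_nat_le_iff)
      then show ?thesis unfolding a0_def by (simp add: algebra_simps)
    qed
    have dv: "real (N div L) \<le> real N / real L"
    proof -
      have "N div L * L \<le> N" by simp
      then have "real (N div L) * real L \<le> real N" by (metis of_nat_le_iff of_nat_mult)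
      then show ?thesis using L0 by (simp add: field_simps)
    qed
    have "real (card {n. n < N \<and> n \<in> SS}) / real N \<le> (real a0 + 2 + 2 * (real N / real L)) / real N"
      using cb dv Npos by (intro divide_right_mono) auto
    also have "\<dots> = (real a0 + 2) / real N + 2 / real L"
      using Npos L0 by (simp add: field_simps)
    also have "(real a0 + 2) / real N < r / 2"
      using NN Npos r by (simp add: field_simps)
    also have "2 / real L < r / 2"
      using Lr L0 r by (simp add: field_simps)
    finally have lt: "real (card {n. n < N \<and> n \<in> SS}) / real N < r" by simp
    show "norm (real (card {n. n < N \<and>
            (\<Sum>r\<le>n. 1 / fact r :: real) \<in> range (cf_convergent (exp 1))}) / real N - 0) < r"
      unfolding set_eq using lt by simp
  qed
qed

end
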